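(* Let $k,\delta>0$, $p\in\mathbb C[z]\setminus\{0\}$ and $m\in\mathbb N$. Then for every sufficiently large $n\in\mathbb N$ there exists a connected open set $W_n\subset\mathbb C$ with $0\in W_n\subseteq\delta\mathbb D$ such that the polynomial $q_n=kz((1+z)^n-p)$ has at least $m$ zeros (counted with multiplicity) in $W_n$ and satisfies $q_n(W_n)\subseteq\mathbb D$.
   Context: $\mathbb D=\{z\in\mathbb C:|z|<1\}$. *)

theory Defs
  imports "HOL-Analysis.Analysis" "HOL-Computational_Algebra.Polynomial"
begin

definition zeros_in :: "complex poly \<Rightarrow> complex set \<Rightarrow> nat" where
  "zeros_in q W = (\<Sum>z\<in>{z\<in>W. poly q z = 0}. order z q)"

end

theory Submission
  imports Defs "HOL-Real_Asymp.Real_Asymp"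
begin

lemma norm_m1: "cmod (-1 - x) = cmod (1 + x)"
proof -
  have "-1 - x = -(1 + x)" by simp
  thus ?thesis by (metis norm_minus_cancel)
qed

lemma exp_quad:
  fixes x :: complex assumes "norm x \<le> 1"
  shows "norm (exp x - 1 - x) \<le> (norm x)^2"
proof -
  have s1: "summable (\<lambda>n. inverse (fact (n + 2)) *\<^sub>R (x ^ (n + 2)))"
    by (rule summable_ignore_initial_segment[OF summable_exp_generic])
  have nrm: "norm (inverse (fact (n + 2)) *\<^sub>R (x ^ (n + 2))) = inverse (fact (n + 2)) * (norm x ^ (n+2))" for n
    unfolding norm_scaleR norm_power by simp
  have s2: "summable (\<lambda>n. inverse (fact (n + 2)) * (norm x ^ (n+2)))"
    using summable_ignore_initial_segment[OF summable_exp_generic[of "norm x"], of 2]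
    by (simp add: field_simps)
  have "exp x - 1 - x = (\<Sum>n. inverse (fact (n + 2)) *\<^sub>R (x ^ (n + 2)))"
    using exp_first_two_terms[of x] by simp
  also have "norm \<dots> \<le> (\<Sum>n. inverse (fact (n + 2)) * (norm x ^ (n+2)))"
    using summable_norm[of "\<lambda>n. inverse (fact (n + 2)) *\<^sub>R (x ^ (n + 2))"] s2 nrm by simp
  also have "\<dots> = exp (norm x) - 1 - norm x"
    using exp_first_two_terms[of "norm x"] by simp
  also have "\<dots> \<le> (norm x)^2" using exp_bound[of "norm x"] assms by simp
  finally show ?thesis .
qed

lemma Ln_small:
  fixes y :: complex assumes "norm (y - 1) \<le> 1/2"
  shows "norm (Ln y) \<le> 2 * norm (y - 1)"
proof -
  define t where "t = norm (y - 1)"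
  have t: "t \<le> 1/2" "t \<ge> 0" using assms by (auto simp: t_def)
  have "norm (Ln (1 + (y - 1)) - (y - 1)) \<le> t^2 / (1 - t)"
    using Ln_approx_linear[of "y - 1"] t by (simp add: t_def)
  also have "\<dots> \<le> t"
    using t by (simp add: field_simps power2_eq_square) (use mult_left_mono[of "2*t" 1 t] in simp)
  finally have "norm (Ln y - (y - 1)) \<le> t" by simp
  hence "norm (Ln y) \<le> t + t"
    using norm_triangle_ineq[of "Ln y - (y - 1)" "y - 1"] by (simp add: t_def)
  thus ?thesis by (simp add: t_def)
qed

lemma near1_notin: fixes y :: complex assumes "cmod (y - 1) \<le> 1/2" shows "y \<notin> \<real>\<^sub>\<le>\<^sub>0" "y \<noteq> 0"
proof -
  have "1 - Re y \<le> cmod (y - 1)" using abs_Re_le_cmod[of "y - 1"] by simp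
  hence "Re y > 0" using assms by simp
  thus "y \<notin> \<real>\<^sub>\<le>\<^sub>0" "y \<noteq> 0" by (auto simp: complex_nonpos_Reals_iff)
qed

lemma core:
  fixes h :: "complex poly" and j n l m :: nat and r \<eta> :: real
  defines "a \<equiv> poly h 0"
  defines "eps \<equiv> 1 / (4 * (real j + 1))"
  defines "N \<equiv> real n"
  defines "L \<equiv> ln N"
  defines "K \<equiv> real j * pi + cmod (Ln a) + 2 * pi * real m + 1"
  defines "U \<equiv> real j * L + K"
  defines "c \<equiv> complex_of_real (real j * (ln (real j * L) - L)) + \<i> * complex_of_real (real j * pi + 2*pi*real l) + Ln a"
  assumes a0: "a \<noteq> 0" and lm: "l < m" and n3: "n \<ge> 3"
    and heta: "\<forall>z. cmod z < \<eta> \<longrightarrow> cmod (poly h z - a) \<le> eps * cmod a"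
    and c1: "j = 0 \<or> real j * L \<le> N"
    and c2: "U / N \<le> 1/2" and c3: "2*U/N < r" and c4: "r \<le> \<eta>"
    and c5: "j = 0 \<or> (real j * ln (real j * L) + K)/(real j * L) + U^2/(N * (real j * L)) \<le> eps"
  shows "\<exists>w \<in> cball c 1. cmod (exp (w / of_nat n) - 1) < r \<and> Re w < K + 1 \<and>
           (exp (w / of_nat n) - 1)^j * poly h (exp (w / of_nat n) - 1) = exp w"
proof -
  define s where "s = \<i> * complex_of_real (real j * pi + 2*pi*real l) + Ln a"
  define \<rho> where "\<rho> = real j * (ln (real j * L) - L)"
  have c_eq: "c = of_real \<rho> + s" by (simp add: c_def s_def \<rho>_def)
  have Npos: "N \<ge> 3" using n3 by (simp add: N_def)
  have L1: "L \<ge> 1"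
  proof -
    have "exp 1 \<le> (3::real)" by (rule exp_le)
    hence "1 \<le> ln (3::real)" by (simp add: ln_ge_iff)
    also have "\<dots> \<le> L" unfolding L_def using Npos by simp
    finally show ?thesis .
  qed
  have jL1: "real j * L \<ge> 1" if "j \<noteq> 0"
  proof -
    have "1 \<le> real j" using that by simp
    hence "1 * 1 \<le> real j * L" using L1 by (intro mult_mono) auto
    thus ?thesis by simp
  qed
  have s_bound: "cmod s + 1 \<le> K"
  proof -
    have "cmod s \<le> cmod (\<i> * complex_of_real (real j * pi + 2*pi*real l)) + cmod (Ln a)"
      unfolding s_def by (rule norm_triangle_ineq)
    also have "cmod (\<i> * complex_of_real (real j * pi + 2*pi*real l)) = real j * pi + 2*pi*real l"
      unfolding norm_mult norm_ii norm_of_real by (simp add: abs_of_nonneg)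
    also have "real j * pi + 2*pi*real l \<le> real j * pi + 2*pi*real m" using lm by simp
    finally show ?thesis unfolding K_def by simp
  qed
  have K0: "K \<ge> 1" using s_bound norm_ge_zero[of s] by linarith
  have rho: "- (real j * L) \<le> \<rho> \<and> \<rho> \<le> 0"
  proof (cases "j = 0")
    case True thus ?thesis by (simp add: \<rho>_def)
  next
    case False
    hence jL: "real j * L \<ge> 1" using jL1 by simp
    have "ln (real j * L) \<ge> 0" using jL by simp
    moreover have "ln (real j * L) \<le> L" using c1 False jL unfolding L_def
      by (simp add: ln_le_cancel_iff) 
    ultimately show ?thesis using False unfolding \<rho>_def
      by (simp add: mult_le_0_iff algebra_simps)
  qed
  define z where "z = (\<lambda>w::complex. exp (w / of_nat n) - 1)"
  define A where "A = (\<lambda>w. - z w * of_real (N / (real j * L)))"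
  define H where "H = (\<lambda>w. poly h (z w) / a)"
  define T where "T = (\<lambda>w. c + of_nat j * Ln (A w) + Ln (H w))"
  have nN: "(of_nat n :: complex) = of_real N" by (simp add: N_def)
  have props: "cmod w \<le> U \<and> Re w < K + 1 \<and> cmod (z w) < r \<and> cmod (H w - 1) \<le> eps \<and>
      (j \<noteq> 0 \<longrightarrow> cmod (A w - 1) \<le> eps)" if w: "w \<in> cball c 1" for w
  proof -
    define d where "d = w - c"
    have d: "cmod d \<le> 1" using w by (simp add: d_def dist_norm norm_minus_commute)
    have weq: "w = of_real \<rho> + (s + d)" by (simp add: d_def c_eq)
    have sd: "cmod (s + d) + 0 \<le> K" using s_bound d norm_triangle_ineq[of s d] by simp
    have wU: "cmod w \<le> U"
    proof -
      have "cmod w \<le> cmod (of_real \<rho> :: complex) + cmod (s + d)" unfolding weq by (rule norm_triangle_ineq)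
      also have "\<dots> \<le> real j * L + K" using rho sd by simp
      finally show ?thesis by (simp add: U_def)
    qed
    have Rew: "Re w < K + 1"
    proof -
      have "Re w = \<rho> + Re (s + d)" by (simp add: weq)
      also have "Re (s + d) \<le> cmod (s + d)" by (rule complex_Re_le_cmod)
      finally show ?thesis using rho sd by simp
    qed
    define x where "x = w / of_nat n"
    have xU: "cmod x \<le> U / N" using wU Npos by (simp add: x_def nN norm_divide divide_right_mono)
    have x12: "cmod x \<le> 1/2" using xU c2 by linarith
    have E: "cmod (exp x - 1 - x) \<le> (cmod x)^2" by (rule exp_quad) (use x12 in simp)
    have zx: "cmod (z w) \<le> 2 * cmod x"
    proof -
      have "cmod (z w) \<le> cmod (exp x - 1 - x) + cmod x"
        using norm_triangle_ineq[of "exp x - 1 - x" x] by (simp add: z_def x_def)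
      also have "\<dots> \<le> (cmod x)^2 + cmod x" using E by simp
      also have "(cmod x)^2 \<le> cmod x" using x12 mult_left_mono[of "cmod x" 1 "cmod x"] by (simp add: power2_eq_square)
      finally show ?thesis by simp
    qed
    have zr: "cmod (z w) < r" using zx xU c3 by simp
    have Hw: "cmod (H w - 1) \<le> eps"
    proof -
      have "cmod (poly h (z w) - a) \<le> eps * cmod a" using heta zr c4 by simp
      hence le: "cmod (poly h (z w) - a) / cmod a \<le> eps * cmod a / cmod a" by (rule divide_right_mono) simp
      have "H w - 1 = (poly h (z w) - a) / a" using a0 by (simp add: H_def field_simps)
      hence "cmod (H w - 1) = cmod (poly h (z w) - a) / cmod a" by (metis norm_divide)
      thus ?thesis using le a0 by simp
    qed
    have Aw: "cmod (A w - 1) \<le> eps" if j0: "j \<noteq> 0"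
    proof -
      have c5': "(real j * ln (real j * L) + K)/(real j * L) + U^2/(N * (real j * L)) \<le> eps" using c5 j0 by simp
      have jLpos: "real j * L > 0" using j0 L1 by simp
      define t where "t = N / (real j * L)"
      have tpos: "t > 0" using jLpos Npos by (simp add: t_def)
      have "A w - 1 = - (x * of_real t) - 1 - (exp x - 1 - x) * of_real t"
      proof -
        have "A w = - (exp x - 1) * of_real t" by (simp add: A_def z_def x_def t_def)
        thus ?thesis by (simp add: algebra_simps)
      qed
      also have "x * of_real t = w / of_real (real j * L)" using Npos jLpos
        by (simp add: x_def t_def nN field_simps)
      also have "- (w / of_real (real j * L)) - 1 = - (of_real (real j * ln (real j * L)) + (s + d)) / of_real (real j * L)"
      proof -
        have "(of_nat j :: complex) \<noteq> 0" "(of_real L :: complex) \<noteq> 0" using j0 L1 by auto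
        thus ?thesis by (simp add: weq \<rho>_def field_simps)
      qed
      finally have eq: "A w - 1 = - (of_real (real j * ln (real j * L)) + (s + d)) / of_real (real j * L) - (exp x - 1 - x) * of_real t" .
      have ln0: "ln (real j * L) \<ge> 0" using jL1[OF j0] by simp
      have b1: "cmod (- (of_real (real j * ln (real j * L)) + (s + d)) / of_real (real j * L)) \<le> (real j * ln (real j * L) + K)/(real j * L)"
      proof -
        have "cmod (of_real (real j * ln (real j * L)) + (s + d)) \<le> real j * ln (real j * L) + K"
        proof -
          have "cmod (of_real (real j * ln (real j * L)) :: complex) = real j * ln (real j * L)"
            using ln0 unfolding norm_of_real by simp
          thus ?thesis using norm_triangle_ineq[of "of_real (real j * ln (real j * L)) :: complex" "s + d"] sd by linarith
        qed
        hence "cmod (of_real (real j * ln (real j * L)) + (s + d)) / \<bar>real j * L\<bar> \<le> (real j * ln (real j * L) + K)/(real j * L)"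
          using jLpos by (simp add: divide_right_mono)
        thus ?thesis unfolding norm_divide norm_minus_cancel norm_of_real .
      qed
      have b2: "cmod ((exp x - 1 - x) * of_real t) \<le> U^2/(N * (real j * L))"
      proof -
        have "cmod ((exp x - 1 - x) * of_real t) \<le> (cmod x)^2 * t" using E tpos by (simp add: norm_mult)
        also have "\<dots> \<le> (U/N)^2 * t" using xU tpos by (intro mult_right_mono power_mono) auto
        also have "\<dots> = U^2/(N * (real j * L))" using Npos jLpos by (simp add: t_def power2_eq_square field_simps)
        finally show ?thesis .
      qed
      have "cmod (A w - 1) \<le> cmod (- (of_real (real j * ln (real j * L)) + (s + d)) / of_real (real j * L)) + cmod ((exp x - 1 - x) * of_real t)"
        unfolding eq by (rule norm_triangle_ineq4)
      thus ?thesis using b1 b2 c5' by simp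
    qed
    show ?thesis using wU Rew zr Hw Aw by blast
  qed
  have eps_le: "eps \<le> 1/4" by (simp add: eps_def field_simps)
  have nb: "H w \<notin> \<real>\<^sub>\<le>\<^sub>0 \<and> (j \<noteq> 0 \<longrightarrow> A w \<notin> \<real>\<^sub>\<le>\<^sub>0)" if "w \<in> cball c 1" for w
  proof -
    have "cmod (H w - 1) \<le> 1/2" "j \<noteq> 0 \<longrightarrow> cmod (A w - 1) \<le> 1/2"
      using props[OF that] eps_le by auto
    thus ?thesis using near1_notin(1) by blast
  qed
  have nN0: "(of_nat n :: complex) \<noteq> 0" using n3 by simp
  have contH: "continuous_on (cball c 1) H"
    unfolding H_def z_def by (intro continuous_intros) (use a0 nN0 in auto)
  have contA: "continuous_on (cball c 1) A"
    unfolding A_def z_def by (intro continuous_intros) (use nN0 in auto)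
  have cont: "continuous_on (cball c 1) T"
  proof (cases "j = 0")
    case True
    have "T = (\<lambda>w. c + Ln (H w))" by (simp add: T_def True)
    moreover have "continuous_on (cball c 1) (\<lambda>w. c + Ln (H w))"
      by (intro continuous_intros contH) (use nb in auto)
    ultimately show ?thesis by simp
  next
    case False
    show ?thesis
      unfolding T_def by (intro continuous_intros contH contA) (use nb False in auto)
  qed
  have maps: "T \<in> cball c 1 \<rightarrow> cball c 1"
  proof
    fix w assume w: "w \<in> cball c 1"
    from props[OF w] have H1: "cmod (H w - 1) \<le> eps" and A1: "j \<noteq> 0 \<longrightarrow> cmod (A w - 1) \<le> eps" by auto
    have lnH: "cmod (Ln (H w)) \<le> 2 * eps" using Ln_small[of "H w"] H1 eps_le by simp
    have lnA: "cmod (of_nat j * Ln (A w)) \<le> real j * (2 * eps)"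
    proof (cases "j = 0")
      case False
      hence "cmod (Ln (A w)) \<le> 2 * eps" using Ln_small[of "A w"] A1 eps_le by simp
      thus ?thesis by (simp add: norm_mult mult_left_mono)
    qed simp
    have "cmod (T w - c) \<le> real j * (2 * eps) + 2 * eps"
      using norm_triangle_ineq[of "of_nat j * Ln (A w)" "Ln (H w)"] lnH lnA by (simp add: T_def)
    also have "\<dots> = 1/2"
    proof -
      have "real j + 1 > 0" by simp
      hence e: "(real j + 1) * eps = 1/4" unfolding eps_def by simp
      have "real j * (2 * eps) + 2 * eps = 2 * ((real j + 1) * eps)" by (simp add: algebra_simps)
      thus ?thesis using e by simp
    qed
    finally show "T w \<in> cball c 1" by (simp add: dist_norm norm_minus_commute)
  qed
  obtain w where w: "w \<in> cball c 1" and fixT: "T w = w"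
    using brouwer_ball[of 1 c T] cont maps by auto
  from props[OF w] have H1: "cmod (H w - 1) \<le> eps" and A1: "j \<noteq> 0 \<longrightarrow> cmod (A w - 1) \<le> eps"
    and zr: "cmod (z w) < r" and Rew: "Re w < K + 1" by auto
  have Hne: "H w \<noteq> 0" using near1_notin(2)[of "H w"] H1 eps_le by simp
  have eA: "exp (of_nat j * Ln (A w)) = A w ^ j"
  proof (cases "j = 0")
    case False
    hence "A w \<noteq> 0" using near1_notin(2)[of "A w"] A1 eps_le by simp
    thus ?thesis by (simp add: exp_of_nat_mult)
  qed simp
  have eI: "exp (\<i> * complex_of_real (real j * pi + 2*pi*real l)) = (-1)^j"
  proof -
    have "\<i> * complex_of_real (real j * pi + 2*pi*real l) = of_nat j * (of_real pi * \<i>) + of_nat l * (2 * of_real pi * \<i>)"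
      by (simp add: algebra_simps)
    thus ?thesis by (simp only: exp_add exp_of_nat_mult exp_pi_i exp_two_pi_i) simp
  qed
  have eR: "exp \<rho> = (real j * L / N)^j"
  proof (cases "j = 0")
    case True thus ?thesis by (simp add: \<rho>_def)
  next
    case False
    have "exp \<rho> = exp (ln (real j * L) - L) ^ j" unfolding \<rho>_def by (rule exp_of_nat_mult)
    also have "exp (ln (real j * L) - L) = real j * L / N"
      using jL1[OF False] Npos by (simp add: exp_diff L_def)
    finally show ?thesis .
  qed
  have "exp w = exp (T w)" using fixT by simp
  also have "\<dots> = exp c * A w ^ j * H w"
    unfolding T_def by (simp add: exp_add eA Hne)
  also have "exp c = of_real ((real j * L / N)^j) * (-1)^j * a"
  proof -
    have "exp c = exp (of_real \<rho>) * exp (\<i> * complex_of_real (real j * pi + 2*pi*real l)) * exp (Ln a)"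
      unfolding c_eq s_def by (simp only: exp_add mult.assoc)
    also have "exp (of_real \<rho>) = (of_real (exp \<rho>) :: complex)" by (rule exp_of_real)
    finally show ?thesis by (simp only: eI eR exp_Ln[OF a0])
  qed
  also have "A w ^ j = (-1)^j * z w ^ j * of_real ((N / (real j * L))^j)"
  proof -
    have "A w = (-1) * z w * of_real (N / (real j * L))" by (simp add: A_def)
    thus ?thesis by (simp only: power_mult_distrib of_real_power)
  qed
  also have "H w = poly h (z w) / a" by (simp add: H_def)
  finally have eqw0: "exp w = of_real ((real j * L / N)^j) * (-1)^j * a * ((-1)^j * z w ^ j * of_real ((N / (real j * L))^j)) * (poly h (z w) / a)" .
  have aa: "a * (poly h (z w) / a) = poly h (z w)" using a0 by simp
  have eqw: "exp w = of_real ((real j * L / N)^j * (N / (real j * L))^j) * ((-1)^j * (-1)^j) * z w ^ j * poly h (z w)"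
  proof -
    have "exp w = of_real ((real j * L / N)^j) * of_real ((N / (real j * L))^j) * ((-1)^j * (-1)^j) * z w ^ j * (a * (poly h (z w) / a))"
      unfolding eqw0 by (simp only: mult_ac)
    thus ?thesis unfolding aa of_real_mult .
  qed
  have one1: "(real j * L / N)^j * (N / (real j * L))^j = 1"
  proof (cases "j = 0")
    case False
    hence "real j * L / N * (N / (real j * L)) = 1" using jL1[OF False] Npos L1 by simp
    thus ?thesis by (simp only: power_mult_distrib[symmetric]) simp
  qed simp
  have one2: "((-1::complex)^j * (-1)^j) = 1" by (simp add: power_mult_distrib[symmetric])
  have "exp w = z w ^ j * poly h (z w)" using eqw one1 one2 by simp
  thus ?thesis using w zr Rew unfolding z_def by auto
qed


theorem lemma3p6:
  fixes k \<delta> :: real and p :: "complex poly" and m :: nat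
  assumes "k > 0" and "\<delta> > 0" and "p \<noteq> 0"
  shows "\<forall>\<^sub>F n in sequentially. \<exists>W :: complex set.
           open W \<and> connected W \<and> 0 \<in> W \<and> W \<subseteq> ball 0 \<delta> \<and>
           (let q = smult (complex_of_real k) ([:0, 1:] * ([:1, 1:] ^ n - p))
            in zeros_in q W \<ge> m \<and> poly q ` W \<subseteq> ball 0 1)"
proof -
  note kpos = assms(1) and dpos = assms(2) and p0 = assms(3)
  define j where "j = order 0 p"
  obtain h where ph: "p = [:0,1:]^j * h" and nd: "\<not> [:0,1:] dvd h"
    using order_decomp[OF p0, of 0] by (auto simp: j_def)
  define a where "a = poly h 0"
  have a0: "a \<noteq> 0" using nd poly_eq_0_iff_dvd[of h 0] by (simp add: a_def)
  have pz: "poly p z = z^j * poly h z" for z by (simp add: ph)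
  define eps where "eps = 1 / (4 * (real j + 1))"
  have eps0: "eps > 0" by (simp add: eps_def)
  define K where "K = real j * pi + cmod (Ln a) + 2 * pi * real m + 1"
  define B where "B = K + 1"
  have K0: "K \<ge> 1" by (simp add: K_def)
  have B0: "B > 0" using K0 by (simp add: B_def)
  obtain \<eta> where eta0: "\<eta> > 0" and heta: "\<forall>z. cmod z < \<eta> \<longrightarrow> cmod (poly h z - a) \<le> eps * cmod a"
  proof -
    have "isCont (poly h) 0" by simp
    moreover have "eps * cmod a > 0" using eps0 a0 by simp
    ultimately obtain d where "d > 0" "\<forall>x. dist x 0 < d \<longrightarrow> dist (poly h x) (poly h 0) < eps * cmod a"
      unfolding continuous_at_eps_delta by blast
    thus ?thesis using that[of d] by (auto simp: a_def dist_norm less_imp_le)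
  qed
  obtain M where M0: "M > 0" and Mb: "\<forall>z\<in>cball 0 1. cmod (poly p z) \<le> M"
  proof -
    have "compact (poly p ` cball 0 1)"
      by (intro compact_continuous_image continuous_intros) auto
    hence "bounded (poly p ` cball 0 1)" by (rule compact_imp_bounded)
    thus ?thesis using that unfolding bounded_pos by blast
  qed
  define r where "r = min (min \<delta> 1) (min \<eta> (1 / (2 * k * (exp B + M))))"
  have r0: "r > 0" using dpos eta0 kpos M0 by (simp add: r_def add_pos_pos)
  have rd: "r \<le> \<delta>" "r \<le> 1" "r \<le> \<eta>" "r \<le> 1 / (2 * k * (exp B + M))" by (auto simp: r_def)
  define U where "U = (\<lambda>n::nat. real j * ln (real n) + K)"
  have limU: "(\<lambda>n. U n / real n) \<longlonglongrightarrow> 0" unfolding U_def by real_asymp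
  have ev3: "\<forall>\<^sub>F n in sequentially. U n / real n < min (1/2) (r/2)"
    by (rule order_tendstoD(2)[OF limU]) (use r0 in simp)
  have ev2: "\<forall>\<^sub>F n in sequentially. j = 0 \<or> real j * ln (real n) \<le> real n"
  proof (cases "j = 0")
    case False
    have "(\<lambda>n. real j * ln (real n) / real n) \<longlonglongrightarrow> 0" by real_asymp
    from order_tendstoD(2)[OF this, of 1] have "\<forall>\<^sub>F n in sequentially. real j * ln (real n) / real n < 1" by simp
    moreover have "\<forall>\<^sub>F n in sequentially. n \<ge> 1" by (rule eventually_ge_at_top)
    ultimately show ?thesis by eventually_elim (auto simp: divide_less_eq)
  qed simp
  have ev5: "\<forall>\<^sub>F n in sequentially. j = 0 \<or> (real j * ln (real j * ln (real n)) + K)/(real j * ln (real n)) + U n^2/(real n * (real j * ln (real n))) \<le> eps"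
  proof (cases "j = 0")
    case False
    hence jp: "real j > 0" by simp
    have "(\<lambda>n. (real j * ln (real j * ln (real n)) + K)/(real j * ln (real n)) + (real j * ln (real n) + K)^2/(real n * (real j * ln (real n)))) \<longlonglongrightarrow> 0"
      using jp by real_asymp
    from order_tendstoD(2)[OF this eps0] show ?thesis
      by eventually_elim (auto simp: U_def)
  qed simp
  have ev1: "\<forall>\<^sub>F n in sequentially. n \<ge> max 3 (max (degree p + 1) (m + 2))" by (rule eventually_ge_at_top)
  show ?thesis
    using ev1 ev2 ev3 ev5
  proof eventually_elim
    case (elim n)
    have n3: "n \<ge> 3" and ndeg: "n > degree p" and nm: "n > m + 1" using elim(1) by auto
    define N where "N = real n"
    have Npos: "N > 0" using n3 by (simp add: N_def)
    define c where "c = (\<lambda>l::nat. complex_of_real (real j * (ln (real j * ln N) - ln N)) + \<i> * complex_of_real (real j * pi + 2*pi*real l) + Ln a)"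
    have ex: "\<exists>w \<in> cball (c l) 1. cmod (exp (w / of_nat n) - 1) < r \<and> Re w < K + 1 \<and>
           (exp (w / of_nat n) - 1)^j * poly h (exp (w / of_nat n) - 1) = exp w" if l: "l < m" for l
    proof -
      have u: "U n / N < 1/2" "U n / N < r/2" using elim(3) by (auto simp: N_def)
      have "2 * U n / N = 2 * (U n / N)" by simp
      hence c3': "U n / N \<le> 1/2" "2 * U n / N < r" using u by linarith+
      show ?thesis
        unfolding c_def K_def N_def
        apply (rule core[where h=h and j=j and n=n and l=l and m=m and r=r and \<eta>=\<eta>, folded a_def])
        using a0 l n3 heta elim(2) elim(4) c3' rd(3)
        by (simp_all add: a_def eps_def K_def U_def N_def)
    qed
    then obtain wf where wf: "\<And>l. l < m \<Longrightarrow> wf l \<in> cball (c l) 1 \<and> cmod (exp (wf l / of_nat n) - 1) < r \<and> Re (wf l) < K + 1 \<and>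
           (exp (wf l / of_nat n) - 1)^j * poly h (exp (wf l / of_nat n) - 1) = exp (wf l)"
      by metis
    define zf where "zf = (\<lambda>l. exp (wf l / of_nat n) - 1)"
    define W where "W = ball (0::complex) r \<inter> ball (-1) (exp (B / N))"
    define q where "q = smult (complex_of_real k) ([:0, 1:] * ([:1, 1:] ^ n - p))"
    have polyq: "poly q z = of_real k * (z * ((1 + z)^n - poly p z))" for z
      by (simp add: q_def poly_power algebra_simps)
    have q0: "q \<noteq> 0"
    proof
      assume "q = 0"
      hence "[:1, 1:] ^ n = p" using kpos by (simp add: q_def)
      hence "degree p = n" by (metis degree_linear_power)
      thus False using ndeg by simp
    qed
    have nN: "(of_nat n :: complex) = of_real N" by (simp add: N_def)
    have zW: "zf l \<in> W" and zroot: "poly q (zf l) = 0" if l: "l < m" for l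
    proof -
      from wf[OF l] have A: "cmod (zf l) < r" "Re (wf l) < B" and E: "zf l ^ j * poly h (zf l) = exp (wf l)"
        by (auto simp: zf_def B_def)
      have one: "1 + zf l = exp (wf l / of_real N)" by (simp add: zf_def nN)
      have "cmod (1 + zf l) = exp (Re (wf l) / N)" unfolding one by simp
      also have "\<dots> < exp (B / N)" using A(2) Npos by (simp add: divide_strict_right_mono)
      finally show "zf l \<in> W" using A(1) by (simp add: W_def dist_norm norm_m1)
      have "(1 + zf l)^n = exp (of_nat n * (wf l / of_real N))" unfolding one by (simp only: exp_of_nat_mult)
      also have "\<dots> = exp (wf l)" using Npos by (simp add: nN)
      finally show "poly q (zf l) = 0" using E by (simp add: polyq pz)
    qed
    have inj: "inj_on zf {..<m}"
    proof (rule inj_onI, rule ccontr)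
      fix l1 l2 assume l1: "l1 \<in> {..<m}" and l2: "l2 \<in> {..<m}" and eq: "zf l1 = zf l2" and ne: "l1 \<noteq> l2"
      have "exp (wf l1 / of_nat n) = exp (wf l2 / of_nat n)" using eq by (simp add: zf_def)
      then obtain t :: int where t: "wf l1 / of_nat n = wf l2 / of_nat n + complex_of_real (real_of_int (2 * t) * pi) * \<i>"
        unfolding exp_eq by blast
      hence "wf l1 = wf l2 + of_nat n * (complex_of_real (real_of_int (2 * t) * pi) * \<i>)" using n3
        by (simp add: field_simps)
      hence imeq: "Im (wf l1) - Im (wf l2) = 2 * pi * real_of_int t * N" by (simp add: N_def)
      have bnd: "\<bar>Im (wf l) - (real j * pi + 2 * pi * real l + Im (Ln a))\<bar> \<le> 1" if "l < m" for l
      proof -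
        have "cmod (wf l - c l) \<le> 1" using wf[OF that] by (simp add: dist_norm norm_minus_commute)
        moreover have "\<bar>Im (wf l - c l)\<bar> \<le> cmod (wf l - c l)" by (rule abs_Im_le_cmod)
        moreover have "Im (c l) = real j * pi + 2 * pi * real l + Im (Ln a)" by (simp add: c_def)
        ultimately show ?thesis by simp
      qed
      have diff: "\<bar>2 * pi * real_of_int t * N - 2 * pi * (real l1 - real l2)\<bar> \<le> 2"
        using bnd[of l1] bnd[of l2] l1 l2 imeq by (simp add: algebra_simps)
      define P where "P = 2 * pi"
      have P6: "P > 6" using pi_gt3 by (simp add: P_def)
      have ab: "\<bar>P * x\<bar> = P * \<bar>x\<bar>" for x using P6 by (simp add: abs_mult)
      have diff': "\<bar>P * (real_of_int t * N) - P * (real l1 - real l2)\<bar> \<le> 2"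
        using diff by (simp add: P_def mult.assoc)
      show False
      proof (cases "t = 0")
        case True
        hence "P * \<bar>real l1 - real l2\<bar> \<le> 2" using diff' ab by simp
        moreover have "\<bar>real l1 - real l2\<bar> \<ge> 1" using ne by linarith
        ultimately have "P * 1 \<le> 2" using P6 mult_left_mono[of 1 "\<bar>real l1 - real l2\<bar>" P] by linarith
        thus False using P6 by simp
      next
        case False
        hence t1: "\<bar>real_of_int t\<bar> \<ge> 1" by linarith
        have "\<bar>real_of_int t * N\<bar> = \<bar>real_of_int t\<bar> * N" using Npos by (simp add: abs_mult)
        also have "\<dots> \<ge> 1 * N" using t1 Npos by (intro mult_right_mono) auto
        finally have tN: "\<bar>real_of_int t * N\<bar> \<ge> N" by simp
        have "P * N \<le> P * \<bar>real_of_int t * N\<bar>" using tN P6 by (intro mult_left_mono) auto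
        hence A1: "P * N \<le> \<bar>P * (real_of_int t * N)\<bar>" using ab by simp
        have "\<bar>real l1 - real l2\<bar> \<le> real m" using l1 l2 by auto
        hence "P * \<bar>real l1 - real l2\<bar> \<le> P * real m" using P6 by (intro mult_left_mono) auto
        hence A2: "\<bar>P * (real l1 - real l2)\<bar> \<le> P * real m" using ab by simp
        have "real m + 2 \<le> N" using nm by (simp add: N_def)
        hence "P * (real m + 2) \<le> P * N" using P6 by (intro mult_left_mono) auto
        hence A3: "P * real m + 2 * P \<le> P * N" by (simp add: algebra_simps)
        have "\<bar>P * (real_of_int t * N)\<bar> - \<bar>P * (real l1 - real l2)\<bar> \<le> 2"
          using diff' by linarith
        thus False using A1 A2 A3 P6 by linarith
      qed
    qed
    have fin: "finite {z \<in> W. poly q z = 0}" using q0 poly_roots_finite[OF q0] by simp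
    have sub: "zf ` {..<m} \<subseteq> {z \<in> W. poly q z = 0}" using zW zroot by auto
    have "m = card (zf ` {..<m})" using inj by (simp add: card_image)
    also have "\<dots> = (\<Sum>z\<in>zf ` {..<m}. 1)" by simp
    also have "\<dots> \<le> (\<Sum>z\<in>zf ` {..<m}. order z q)"
    proof (rule sum_mono)
      fix z assume "z \<in> zf ` {..<m}"
      hence "poly q z = 0" using sub by auto
      thus "1 \<le> order z q" using q0 order_root[of q z] by simp
    qed
    also have "\<dots> \<le> (\<Sum>z\<in>{z \<in> W. poly q z = 0}. order z q)"
      by (rule sum_mono2[OF fin sub]) simp
    finally have zc: "zeros_in q W \<ge> m" by (simp add: zeros_in_def)
    have img: "poly q ` W \<subseteq> ball 0 1"
    proof
      fix y assume "y \<in> poly q ` W"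
      then obtain z where z: "z \<in> W" and y: "y = poly q z" by auto
      have zr: "cmod z < r" and z1: "cmod (1 + z) < exp (B / N)" using z by (auto simp: W_def dist_norm norm_m1)
      have pM: "cmod (poly p z) \<le> M" using Mb zr rd(2) by simp
      have "cmod ((1 + z)^n) \<le> exp (B / N) ^ n" unfolding norm_power
        by (rule power_mono) (use z1 in auto)
      also have "\<dots> = exp B" using Npos by (simp add: exp_of_nat_mult[symmetric] N_def)
      finally have pw: "cmod ((1 + z)^n) \<le> exp B" .
      have br: "cmod ((1 + z)^n - poly p z) \<le> exp B + M"
        using norm_triangle_ineq4[of "(1 + z)^n" "poly p z"] pw pM by simp
      have "cmod y = k * (cmod z * cmod ((1 + z)^n - poly p z))"
        using kpos by (simp add: y polyq norm_mult)
      also have "\<dots> \<le> k * (r * (exp B + M))"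
        using kpos br zr r0 by (intro mult_left_mono mult_mono) auto
      also have "\<dots> \<le> k * ((1 / (2 * k * (exp B + M))) * (exp B + M))"
        using kpos M0 rd(4) by (intro mult_left_mono mult_right_mono) (auto simp: add_pos_pos less_imp_le)
      also have "\<dots> = 1/2"
      proof -
        have "exp B + M > 0" using M0 by (simp add: add_pos_pos)
        thus ?thesis using kpos by simp
      qed
      finally show "y \<in> ball 0 1" by simp
    qed
    have "open W" by (simp add: W_def open_Int)
    moreover have "connected W" by (simp add: W_def convex_connected convex_Int)
    moreover have "0 \<in> W" using r0 B0 Npos by (simp add: W_def)
    moreover have "W \<subseteq> ball 0 \<delta>" using rd(1) by (auto simp: W_def)
    ultimately show ?case using zc img unfolding Let_def q_def[symmetric] by blast
  qed
qed

end
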